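(* Let $\mathcal{G}$ be a signed digraph with signed Laplacian $L$. (1) If $L$ has corank $1$, then $\mathcal{G}$ has a rooted spanning tree. (2) If $-L$ is EEP, or if $L$ is weight balanced and of corank $1$, then $L$ is irreducible (equivalently, $\mathcal{G}$ is strongly connected).
   Context: A signed digraph is $\mathcal{G}=(\mathcal{V},\mathcal{E},A)$ with $\mathcal{V}=\{1,\dots,n\}$, real weighted adjacency matrix $A$ (entries of any sign), and $A_{ij}\neq0$ iff $(j,i)\in\mathcal{E}$ is a directed edge from $j$ to $i$. Its signed Laplacian is $L=\Sigma-A$ with $\Sigma=\mathrm{diag}(\sigma_i)$, $\sigma_i=\sum_jA_{ij}$. $\mathcal{G}$ has a rooted spanning tree if there is a node $j$ from which every node can be reached by a directed path of edges in $\mathcal{E}$; $\mathcal{G}$ is strongly connected if every node can be reached from every other node. $L$ is irreducible if there is no permutation matrix $P$ with $P^\top LP$ block upper triangular with two nontrivial square diagonal blocks. Weight balanced means $L^\top\mathbf{1}=0$. $M$ is EEP if there is $t_0\ge0$ with $e^{Mt}$ entrywise positive for all $t\ge t_0$. Corank means dimension of the kernel. *)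

theory Defs
  imports "HOL-Analysis.Analysis"
begin

definition edges :: "real^'n^'n \<Rightarrow> ('n \<times> 'n) set" where
  "edges A = {(j, i). A $ i $ j \<noteq> 0}"

definition signed_laplacian :: "real^'n^'n \<Rightarrow> real^'n^'n" where
  "signed_laplacian A = (\<chi> i j. (if i = j then (\<Sum>k\<in>UNIV. A $ i $ k) else 0) - A $ i $ j)"

definition has_rooted_spanning_tree :: "real^'n^'n \<Rightarrow> bool" where
  "has_rooted_spanning_tree A \<longleftrightarrow> (\<exists>r. \<forall>v. (r, v) \<in> (edges A)\<^sup>*)"

definition strongly_connected :: "real^'n^'n \<Rightarrow> bool" where
  "strongly_connected A \<longleftrightarrow> (\<forall>u v. (u, v) \<in> (edges A)\<^sup>*)"

definition corank :: "real^'n^'n \<Rightarrow> nat" where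
  "corank M = dim {x. M *v x = 0}"

definition weight_balanced :: "real^'n^'n \<Rightarrow> bool" where
  "weight_balanced L \<longleftrightarrow> transpose L *v (\<chi> i. 1) = 0"

definition perm_matrix :: "('n \<Rightarrow> 'n) \<Rightarrow> real^'n^'n" where
  "perm_matrix p = (\<chi> i j. if i = p j then 1 else 0)"

text \<open>Block upper triangular w.r.t. the index order, with two nontrivial square diagonal
  blocks: the first block is indexed by a nonempty proper initial segment S of the
  (linearly ordered) index type, and the lower-left block (rows outside S, columns in S) is zero.\<close>
definition block_upper_triangular :: "real^('n::{finite,linorder})^('n::{finite,linorder}) \<Rightarrow> bool" where
  "block_upper_triangular M \<longleftrightarrow>
     (\<exists>S. S \<noteq> {} \<and> S \<noteq> UNIV \<and> (\<forall>i j. j \<in> S \<longrightarrow> i \<le> j \<longrightarrow> i \<in> S) \<and>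
          (\<forall>i j. i \<notin> S \<longrightarrow> j \<in> S \<longrightarrow> M $ i $ j = 0))"

definition irreducible_matrix :: "real^('n::{finite,linorder})^('n::{finite,linorder}) \<Rightarrow> bool" where
  "irreducible_matrix L \<longleftrightarrow>
     \<not> (\<exists>p. p permutes UNIV \<and>
            block_upper_triangular (transpose (perm_matrix p) ** L ** perm_matrix p))"

primrec matpow :: "real^'n^'n \<Rightarrow> nat \<Rightarrow> real^'n^'n" where
  "matpow M 0 = mat 1"
| "matpow M (Suc k) = M ** matpow M k"

definition mat_exp :: "real^'n^'n \<Rightarrow> real^'n^'n" where
  "mat_exp M = (\<chi> i j. \<Sum>k. matpow M k $ i $ j / fact k)"

definition EEP :: "real^'n^'n \<Rightarrow> bool" where
  "EEP M \<longleftrightarrow> (\<exists>t0\<ge>0. \<forall>t\<ge>t0. \<forall>i j. mat_exp (t *\<^sub>R M) $ i $ j > 0)"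

end

theory Submission
  imports Defs
begin

lemma corank_rank:
  fixes L :: "real^'n^'n"
  shows "corank L + rank L = CARD('n)"
proof -
  have eq: "{y \<in> UNIV. \<forall>x\<in>span (rows L). orthogonal x y} = {y. L *v y = 0}"
  proof (intro set_eqI iffI)
    fix y assume "y \<in> {y \<in> UNIV. \<forall>x\<in>span (rows L). orthogonal x y}"
    then have h: "\<forall>x\<in>span (rows L). orthogonal x y" by simp
    have "L *v y = 0"
    proof (subst vec_eq_iff, intro allI)
      fix k
      have "L $ k \<in> rows L" by (auto simp: rows_def row_def vec_lambda_eta)
      then have "L $ k \<in> span (rows L)" by (rule span_base)
      then have "orthogonal (L$k) y" using h by blast
      then show "(L *v y) $ k = 0 $ k" by (simp add: matrix_vector_mul_component orthogonal_def)
    qed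
    then show "y \<in> {y. L *v y = 0}" by simp
  next
    fix y assume "y \<in> {y. L *v y = 0}"
    then show "y \<in> {y \<in> UNIV. \<forall>x\<in>span (rows L). orthogonal x y}"
      using orthogonal_nullspace_rowspace orthogonal_commute by blast
  qed
  have "dim {y \<in> UNIV. \<forall>x\<in>span (rows L). orthogonal x y} + dim (span (rows L)) = dim (UNIV :: (real^'n) set)"
    by (rule dim_subspace_orthogonal_to_vectors) auto
  then show ?thesis using eq by (simp add: corank_def row_rank_def dim_span)
qed

lemma row_in_span:
  fixes L :: "real^'n^'n"
  assumes a: "a \<in> T" and z: "\<And>j. j \<notin> T \<Longrightarrow> L$i$j = 0" and s: "(\<Sum>j\<in>UNIV. L$i$j) = 0"
  shows "L $ i \<in> span ((\<lambda>j. axis j 1 - axis a 1) ` (T - {a}))"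
proof -
  have sU: "(\<Sum>j\<in>UNIV. L$i$j) = (\<Sum>j\<in>T. L$i$j)"
    by (rule sum.mono_neutral_right) (auto simp: z)
  have sT: "(\<Sum>j\<in>T. L$i$j) = L$i$a + (\<Sum>j\<in>T-{a}. L$i$j)"
    using a by (simp add: sum.remove)
  have eq: "L $ i = (\<Sum>j\<in>T - {a}. L$i$j *\<^sub>R (axis j 1 - axis a 1))"
  proof (subst vec_eq_iff, intro allI)
    fix k
    have "(\<Sum>j\<in>T - {a}. L$i$j *\<^sub>R (axis j 1 - axis a 1)) $ k
        = (\<Sum>j\<in>T - {a}. L$i$j * (if k = j then 1 else 0)) - (if a = k then 1 else 0) * (\<Sum>j\<in>T - {a}. L$i$j)"
      by (cases "k = a") (simp_all add: sum_component axis_def algebra_simps sum_subtractf sum_distrib_left)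
    also have "\<dots> = L$i$k"
    proof (cases "k = a")
      case True
      have "(\<Sum>j\<in>T - {a}. L$i$j * (if a = j then 1 else 0)) = 0" by (rule sum.neutral) auto
      then show ?thesis using s sU sT True by simp
    next
      case False
      then show ?thesis using z[of k] by (auto simp: if_distrib sum.delta' cong: if_cong)
    qed
    finally show "L $ i $ k = (\<Sum>j\<in>T - {a}. L$i$j *\<^sub>R (axis j 1 - axis a 1)) $ k" by simp
  qed
  show ?thesis
    by (subst eq, rule span_sum, rule span_scale, rule span_base) auto
qed


lemma row_mem_rows: "r \<in> rows (L::real^'n^'m) \<Longrightarrow> \<exists>i. r = L $ i"
  by (auto simp: rows_def row_def vec_lambda_eta)

lemma card_compl: "card (- (X::'n::finite set)) = CARD('n) - card X"
  by (metis Compl_eq_Diff_UNIV card_Diff_subset finite subset_UNIV)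

lemma rank_le_two_sets:
  fixes L :: "real^'n^'n"
  assumes rs: "\<And>i. (\<Sum>j\<in>UNIV. L$i$j) = 0"
    and a1: "a1 \<in> T1" and c1: "\<And>i j. i \<in> T1 \<Longrightarrow> j \<notin> T1 \<Longrightarrow> L$i$j = 0"
    and a2: "a2 \<in> T2" and c2: "\<And>i j. i \<in> T2 \<Longrightarrow> j \<notin> T2 \<Longrightarrow> L$i$j = 0"
    and d: "T1 \<inter> T2 = {}"
  shows "rank L + 2 \<le> CARD('n)"
proof -
  let ?B1 = "(\<lambda>j. axis j 1 - axis a1 1) ` (T1 - {a1}) :: (real^'n) set"
  let ?B2 = "(\<lambda>j. axis j 1 - axis a2 1) ` (T2 - {a2}) :: (real^'n) set"
  let ?B3 = "(\<lambda>i. L $ i) ` (- (T1 \<union> T2))"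
  let ?B = "?B1 \<union> ?B2 \<union> ?B3"
  have sub: "rows L \<subseteq> span ?B"
  proof
    fix r assume "r \<in> rows L"
    then obtain i where r: "r = L $ i" using row_mem_rows by metis
    show "r \<in> span ?B"
    proof (cases "i \<in> T1")
      case True
      have "L $ i \<in> span ?B1" by (rule row_in_span[OF a1 c1[OF True] rs])
      moreover have "span ?B1 \<subseteq> span ?B" by (rule span_mono) (simp add: subset_iff)
        ultimately show ?thesis unfolding r by (rule subsetD[rotated])
    next
      case F1: False
      show ?thesis
      proof (cases "i \<in> T2")
        case True
        have "L $ i \<in> span ?B2" by (rule row_in_span[OF a2 c2[OF True] rs])
        moreover have "span ?B2 \<subseteq> span ?B" by (rule span_mono) (simp add: subset_iff)
        ultimately show ?thesis unfolding r by (rule subsetD[rotated])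
      next
        case False
        then have "L $ i \<in> ?B3" using F1 by simp
        then have "L $ i \<in> ?B" by (rule UnI2)
        then show ?thesis unfolding r by (rule span_base)
      qed
    qed
  qed
  have "rank L \<le> card ?B" unfolding row_rank_def by (rule dim_le_card[OF sub]) simp
  also have "\<dots> \<le> card ?B1 + card ?B2 + card ?B3"
    using card_Un_le[of "?B1 \<union> ?B2" ?B3] card_Un_le[of ?B1 ?B2] by linarith
  also have "\<dots> \<le> card (T1 - {a1}) + card (T2 - {a2}) + card (- (T1 \<union> T2))"
    by (intro add_mono card_image_le) auto
  also have "\<dots> = (card T1 - 1) + (card T2 - 1) + (CARD('n) - card (T1 \<union> T2))"
    using a1 a2 card_compl[of "T1 \<union> T2"] by simp
  finally have "rank L \<le> (card T1 - 1) + (card T2 - 1) + (CARD('n) - card (T1 \<union> T2))" .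
  moreover have "card (T1 \<union> T2) = card T1 + card T2" using d by (simp add: card_Un_disjoint)
  moreover have "card (T1 \<union> T2) \<le> CARD('n)" by (rule card_mono) auto
  moreover have "card T1 > 0" "card T2 > 0" using a1 a2 by (auto simp: card_gt_0_iff)
  ultimately show ?thesis by linarith
qed

lemma rank_le_wb:
  fixes L :: "real^'n^'n"
  assumes rs: "\<And>i. (\<Sum>j\<in>UNIV. L$i$j) = 0"
    and cs: "\<And>j. (\<Sum>i\<in>UNIV. L$i$j) = 0"
    and a: "a \<in> T" and c: "\<And>i j. i \<in> T \<Longrightarrow> j \<notin> T \<Longrightarrow> L$i$j = 0"
    and s0: "s0 \<notin> T"
  shows "rank L + 2 \<le> CARD('n)"
proof -
  let ?B1 = "(\<lambda>j. axis j 1 - axis a 1) ` (T - {a}) :: (real^'n) set"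
  let ?B3 = "(\<lambda>i. L $ i) ` (- (T \<union> {s0}))"
  let ?B = "?B1 \<union> ?B3"
  have other: "L $ i \<in> span ?B" if "i \<noteq> s0" for i
  proof (cases "i \<in> T")
    case True
    have "L $ i \<in> span ?B1" by (rule row_in_span[OF a c[OF True] rs])
    moreover have "span ?B1 \<subseteq> span ?B" by (rule span_mono) (simp add: subset_iff)
    ultimately show ?thesis by (rule subsetD[rotated])
  next
    case False
    then have "L $ i \<in> ?B3" using that by simp
    then have "L $ i \<in> ?B" by (rule UnI2)
    then show ?thesis by (rule span_base)
  qed
  have tot: "(\<Sum>i\<in>UNIV. L $ i) = 0"
    by (subst vec_eq_iff) (simp add: sum_component cs)
  have "(\<Sum>i\<in>UNIV. L $ i) = L $ s0 + (\<Sum>i\<in>UNIV - {s0}. L $ i)"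
    by (simp add: sum.remove)
  then have "L $ s0 = - (\<Sum>i\<in>UNIV - {s0}. L $ i)" using tot by (simp add: eq_neg_iff_add_eq_0)
  moreover have "(\<Sum>i\<in>UNIV - {s0}. L $ i) \<in> span ?B"
    proof (rule span_sum)
    fix x assume "x \<in> UNIV - {s0}"
    then show "L $ x \<in> span ?B" by (intro other) simp
  qed
  ultimately have s0in: "L $ s0 \<in> span ?B" by (metis span_neg)
  have sub: "rows L \<subseteq> span ?B"
  proof
    fix r assume "r \<in> rows L"
    then obtain i where r: "r = L $ i" using row_mem_rows by metis
    then show "r \<in> span ?B" using other[of i] s0in by (cases "i = s0") simp_all
  qed
  have "rank L \<le> card ?B" unfolding row_rank_def by (rule dim_le_card[OF sub]) simp
  also have "\<dots> \<le> card ?B1 + card ?B3" by (rule card_Un_le)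
  also have "\<dots> \<le> card (T - {a}) + card (- (T \<union> {s0}))"
    by (intro add_mono card_image_le) auto
  also have "\<dots> = (card T - 1) + (CARD('n) - card (T \<union> {s0}))"
    using a card_compl[of "T \<union> {s0}"] by simp
  finally have "rank L \<le> (card T - 1) + (CARD('n) - card (T \<union> {s0}))" .
  moreover have "card (T \<union> {s0}) = card T + 1" using s0 by simp
  moreover have "card (T \<union> {s0}) \<le> CARD('n)" by (rule card_mono) auto
  moreover have "card T > 0" using a by (auto simp: card_gt_0_iff)
  ultimately show ?thesis by linarith
qed


definition anc :: "real^'n^'n \<Rightarrow> 'n \<Rightarrow> 'n set" where
  "anc A v = {u. (u, v) \<in> (edges A)\<^sup>*}"

lemma lap_entry:
  "signed_laplacian A $ i $ j = (if i = j then (\<Sum>k\<in>UNIV. A$i$k) else 0) - A$i$j"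
  by (simp add: signed_laplacian_def)

lemma lap_rowsum: "(\<Sum>j\<in>UNIV. signed_laplacian A $ i $ j) = 0"
  by (simp add: lap_entry sum_subtractf)

lemma anc_closed:
  assumes "i \<in> anc A v" "j \<notin> anc A v"
  shows "A$i$j = 0"
proof (rule ccontr)
  assume "A$i$j \<noteq> 0"
  then have "(j, i) \<in> edges A" by (simp add: edges_def)
  moreover have "(i, v) \<in> (edges A)\<^sup>*" using assms(1) by (simp add: anc_def)
  ultimately have "(j, v) \<in> (edges A)\<^sup>*" by (rule converse_rtrancl_into_rtrancl)
  then show False using assms(2) by (simp add: anc_def)
qed

lemma lap_closed:
  assumes "i \<in> anc A v" "j \<notin> anc A v"
  shows "signed_laplacian A $ i $ j = 0"
proof -
  have "i \<noteq> j" using assms by auto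
  then show ?thesis using anc_closed[OF assms] by (simp add: lap_entry)
qed

lemma self_anc: "v \<in> anc A v" by (simp add: anc_def)

lemma part1:
  fixes A :: "real^'n^'n"
  assumes c: "corank (signed_laplacian A) = 1"
  shows "has_rooted_spanning_tree A"
proof (rule ccontr)
  let ?L = "signed_laplacian A"
  let ?E = "edges A"
  assume "\<not> has_rooted_spanning_tree A"
  then have nr: "\<forall>r. \<exists>v. (r, v) \<notin> ?E\<^sup>*" by (auto simp: has_rooted_spanning_tree_def)
  obtain v where v: "\<And>w. card (anc A v) \<le> card (anc A w)"
    using ex_has_least_nat[of "\<lambda>_. True" undefined "\<lambda>w. card (anc A w)"] by auto
  have bk: "v \<in> anc A u" if hu: "u \<in> anc A v" for u
  proof -
    have sub: "anc A u \<subseteq> anc A v" using hu by (auto simp: anc_def)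
    have "card (anc A u) = card (anc A v)" using v[of u] card_mono[OF _ sub] by simp
    then have "anc A u = anc A v" using card_subset_eq[OF _ sub] by simp
    then show ?thesis using self_anc by simp
  qed
  obtain w where w: "(v, w) \<notin> ?E\<^sup>*" using nr by blast
  have d: "anc A v \<inter> anc A w = {}"
  proof (rule ccontr)
    assume "anc A v \<inter> anc A w \<noteq> {}"
    then obtain u where "u \<in> anc A v" "u \<in> anc A w" by blast
    then have "(v, u) \<in> ?E\<^sup>*" "(u, w) \<in> ?E\<^sup>*" using bk by (auto simp: anc_def)
    then show False using w by (meson rtrancl_trans)
  qed
  have "rank ?L + 2 \<le> CARD('n)"
    by (rule rank_le_two_sets[OF lap_rowsum self_anc _ self_anc _ d])
       (auto intro: lap_closed)
  then show False using corank_rank[of ?L] c by simp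
qed

lemma part2wb:
  fixes A :: "real^'n^'n"
  assumes wb: "weight_balanced (signed_laplacian A)"
    and c: "corank (signed_laplacian A) = 1"
  shows "strongly_connected A"
proof (rule ccontr)
  let ?L = "signed_laplacian A"
  assume "\<not> strongly_connected A"
  then obtain u v where uv: "(u, v) \<notin> (edges A)\<^sup>*" by (auto simp: strongly_connected_def)
  have cs: "(\<Sum>i\<in>UNIV. ?L$i$j) = 0" for j
  proof -
    have "(transpose ?L *v (\<chi> i. 1)) $ j = 0" using wb by (simp add: weight_balanced_def)
    then show ?thesis by (simp add: matrix_vector_mult_def transpose_def)
  qed
  have "u \<notin> anc A v" using uv by (simp add: anc_def)
  have "rank ?L + 2 \<le> CARD('n)"
    by (rule rank_le_wb[OF lap_rowsum cs self_anc _ \<open>u \<notin> anc A v\<close>]) (auto intro: lap_closed)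
  then show False using corank_rank[of ?L] c by simp
qed

lemma part2eep:
  fixes A :: "real^'n^'n"
  assumes e: "EEP (- signed_laplacian A)"
  shows "strongly_connected A"
proof (rule ccontr)
  let ?L = "signed_laplacian A"
  assume "\<not> strongly_connected A"
  then obtain u v where uv: "(u, v) \<notin> (edges A)\<^sup>*" by (auto simp: strongly_connected_def)
  then have un: "u \<notin> anc A v" by (simp add: anc_def)
  obtain t0 where t0: "t0 \<ge> 0" "\<And>i j. mat_exp (t0 *\<^sub>R (- ?L)) $ i $ j > 0"
    using e unfolding EEP_def by blast
  define M where "M = t0 *\<^sub>R (- ?L)"
  have Mz: "M $ i $ j = 0" if "i \<in> anc A v" "j \<notin> anc A v" for i j
    using lap_closed[OF that] by (simp add: M_def)
  have pz: "\<forall>i j. i \<in> anc A v \<longrightarrow> j \<notin> anc A v \<longrightarrow> matpow M k $ i $ j = 0" for k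
  proof (induction k)
    case 0
    then show ?case by (auto simp: mat_def)
  next
    case (Suc k)
    show ?case
    proof (intro allI impI)
      fix i j assume ij: "i \<in> anc A v" "j \<notin> anc A v"
      have "(M ** matpow M k) $ i $ j = (\<Sum>l\<in>UNIV. M $ i $ l * matpow M k $ l $ j)"
        by (simp add: matrix_matrix_mult_def)
      also have "\<dots> = 0"
      proof (rule sum.neutral, intro ballI)
        fix l
        show "M $ i $ l * matpow M k $ l $ j = 0"
        proof (cases "l \<in> anc A v")
          case True then show ?thesis using Suc.IH ij by simp
        next
          case False then show ?thesis using Mz[OF ij(1) False] by simp
        qed
      qed
      finally show "matpow M (Suc k) $ i $ j = 0" by simp
    qed
  qed
  have "mat_exp M $ v $ u = 0"
    using pz[rule_format, OF self_anc un] by (simp add: mat_exp_def)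
  then show False using t0(2)[of v u] by (simp add: M_def)
qed

lemma perm_entry:
  fixes L :: "real^'n^'n"
  shows "(transpose (perm_matrix p) ** L ** perm_matrix p) $ i $ j = L $ p i $ p j"
proof -
  have d: "\<And>P (x::real). (if P then 1 else 0) * x = (if P then x else 0)" by simp
  have d2: "\<And>P (x::real). x * (if P then 1 else 0) = (if P then x else 0)" by simp
  show ?thesis by (simp add: matrix_matrix_mult_def transpose_def perm_matrix_def d d2)
qed

lemma sc_irred:
  fixes A :: "real^('n::{finite,linorder})^('n::{finite,linorder})"
  assumes sc: "strongly_connected A"
  shows "irreducible_matrix (signed_laplacian A)"
  unfolding irreducible_matrix_def
proof
  let ?L = "signed_laplacian A"
  assume "\<exists>p. p permutes UNIV \<and> block_upper_triangular (transpose (perm_matrix p) ** ?L ** perm_matrix p)"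
  then obtain p where p: "p permutes UNIV"
    and b: "block_upper_triangular (transpose (perm_matrix p) ** ?L ** perm_matrix p)" by blast
  then obtain S where S: "S \<noteq> {}" "S \<noteq> UNIV"
    and z0: "\<And>i j. i \<notin> S \<Longrightarrow> j \<in> S \<Longrightarrow> (transpose (perm_matrix p) ** ?L ** perm_matrix p) $ i $ j = 0"
    unfolding block_upper_triangular_def by blast
  have z: "\<And>i j. i \<notin> S \<Longrightarrow> j \<in> S \<Longrightarrow> ?L $ p i $ p j = 0" using z0 by (simp add: perm_entry)
  have inj: "inj p" using p permutes_inj by blast
  have surj: "surj p" using p permutes_surj by blast
  obtain s where s: "s \<in> S" using S by blast
  obtain t where t: "t \<notin> S" using S by blast
  have "(p s, y) \<in> (edges A)\<^sup>* \<Longrightarrow> y \<in> p ` S" for y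
  proof (induction rule: rtrancl_induct)
    case base then show ?case using s by blast
  next
    case (step y z)
    from step.IH obtain j where j: "j \<in> S" "y = p j" by blast
    obtain i where i: "z = p i" using surj by (metis surjD)
    show ?case
    proof (rule ccontr)
      assume "z \<notin> p ` S"
      then have iS: "i \<notin> S" using i by blast
      then have "i \<noteq> j" using j by blast
      then have "p i \<noteq> p j" using inj by (meson injD)
      then have "A $ p i $ p j = 0" using z[OF iS j(1)] by (simp add: lap_entry)
      then show False using step.hyps(2) i j by (simp add: edges_def)
    qed
  qed
  then have "p t \<in> p ` S" using sc by (simp add: strongly_connected_def)
  then show False using t inj by (simp add: inj_image_mem_iff)
qed

theorem lemma5:
  fixes A :: "real^('n::{finite,linorder})^('n::{finite,linorder})"
  defines "L \<equiv> signed_laplacian A"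
  shows "(corank L = 1 \<longrightarrow> has_rooted_spanning_tree A)
    \<and> ((EEP (- L) \<or> (weight_balanced L \<and> corank L = 1)) \<longrightarrow>
         irreducible_matrix L \<and> strongly_connected A)"
  unfolding L_def using part1 part2wb part2eep sc_irred by blast

end
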